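(* Let $X$ be a finite set, $k$ an integer with $1\le k\le|X|-1$, $\mathfrak{C}$ a nonempty symmetric family of choice functions for $\binom{X}{k}$, and $\mathcal{F}$ the set of (not necessarily simple) averaging functions for $\mathfrak{C}$. Suppose that for some $r\in\{3,\dots,k\}$ the following holds: for every $Y\in\binom{X}{k}$ and every one-to-one $\bar a\in Y^r$ there is $f\in\mathcal{F}_{[r]}$ with $f_Y(\bar a)=a_2$ and $f_Z(\bar b)=b_1$ for every $Z\in\binom{X}{k}$ with $Z\ne Y$ and every $\bar b\in Z^r$. Then $\mathfrak{C}$ is full, i.e. every choice function for $\binom{X}{k}$ belongs to $\mathfrak{C}$.
   Context: $\binom{X}{k}=\{Y\subseteq X:|Y|=k\}$; choice functions satisfy $c(Y)\in Y$. Symmetric: for every permutation $\pi$ of $X$ and $c\in\mathfrak{C}$, $(\pi*c)(Y)=\pi^{-1}(c(\pi(Y)))$ is in $\mathfrak{C}$. $\mathcal{F}_{[r]}$ is the set of families $f=\langle f_Y:Y\in\binom{X}{k}\rangle$ with $f_Y:Y^r\to Y$, $f_Y(x_1,\dots,x_r)\in\{x_1,\dots,x_r\}$, such that for all $c_1,\dots,c_r\in\mathfrak{C}$ the function $Y\mapsto f_Y(c_1(Y),\dots,c_r(Y))$ is in $\mathfrak{C}$. Standing assumption: every $f\in\mathcal{F}$ that is simple (i.e. $f_Y$ is the restriction to $Y^r$ of a single function independent of $Y$) is a monarchy (for some $t$, $f_Y(\bar x)=x_t$ for all $Y,\bar x$). *)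

theory Defs
  imports Main "HOL-Library.FuncSet" "HOL-Combinatorics.Permutations"
begin

definition ksets :: "'a set \<Rightarrow> nat \<Rightarrow> 'a set set" where
  "ksets X k = {Y. Y \<subseteq> X \<and> card Y = k}"

definition choice_funs :: "'a set \<Rightarrow> nat \<Rightarrow> ('a set \<Rightarrow> 'a) set" where
  "choice_funs X k = (\<Pi>\<^sub>E Y\<in>ksets X k. Y)"

definition perm_act :: "'a set \<Rightarrow> nat \<Rightarrow> ('a \<Rightarrow> 'a) \<Rightarrow> ('a set \<Rightarrow> 'a) \<Rightarrow> ('a set \<Rightarrow> 'a)" where
  "perm_act X k \<pi> c = (\<lambda>Y\<in>ksets X k. inv \<pi> (c (\<pi> ` Y)))"

definition symmetric_family :: "'a set \<Rightarrow> nat \<Rightarrow> ('a set \<Rightarrow> 'a) set \<Rightarrow> bool" where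
  "symmetric_family X k C \<longleftrightarrow>
     (\<forall>\<pi>. \<pi> permutes X \<longrightarrow> (\<forall>c\<in>C. perm_act X k \<pi> c \<in> C))"

text \<open>r-tuples from Y are functions on {..<r} (index i stands for x_{i+1}).
  A family f = <f_Y> is given as f :: 'a set => (nat => 'a) => 'a, where only
  the values f Y x with Y a k-subset and x in Y^r matter.\<close>
definition averaging_funs :: "'a set \<Rightarrow> nat \<Rightarrow> ('a set \<Rightarrow> 'a) set \<Rightarrow> nat
     \<Rightarrow> ('a set \<Rightarrow> (nat \<Rightarrow> 'a) \<Rightarrow> 'a) set" where
  "averaging_funs X k C r =
     {f. (\<forall>Y\<in>ksets X k. \<forall>x\<in>(\<Pi>\<^sub>E i\<in>{..<r}. Y). f Y x \<in> x ` {..<r}) \<and>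
         (\<forall>c. (\<forall>i<r. c i \<in> C) \<longrightarrow>
              (\<lambda>Y\<in>ksets X k. f Y (\<lambda>i\<in>{..<r}. c i Y)) \<in> C)}"

definition simple_fam :: "'a set \<Rightarrow> nat \<Rightarrow> nat \<Rightarrow> ('a set \<Rightarrow> (nat \<Rightarrow> 'a) \<Rightarrow> 'a) \<Rightarrow> bool" where
  "simple_fam X k r f \<longleftrightarrow>
     (\<exists>g. \<forall>Y\<in>ksets X k. \<forall>x\<in>(\<Pi>\<^sub>E i\<in>{..<r}. Y). f Y x = g x)"

definition monarchy :: "'a set \<Rightarrow> nat \<Rightarrow> nat \<Rightarrow> ('a set \<Rightarrow> (nat \<Rightarrow> 'a) \<Rightarrow> 'a) \<Rightarrow> bool" where
  "monarchy X k r f \<longleftrightarrow>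
     (\<exists>t<r. \<forall>Y\<in>ksets X k. \<forall>x\<in>(\<Pi>\<^sub>E i\<in>{..<r}. Y). f Y x = x t)"

end

theory Submission
  imports Defs
begin

lemma move_val:
  assumes C: "C \<subseteq> choice_funs X k" and sym: "symmetric_family X k C"
    and c: "c \<in> C" and Y: "Y \<in> ksets X k" and v: "v \<in> Y"
  shows "\<exists>c'\<in>C. c' Y = v"
proof -
  have cY: "c Y \<in> Y" using C c Y unfolding choice_funs_def by auto
  have YX: "Y \<subseteq> X" using Y unfolding ksets_def by auto
  let ?p = "transpose (c Y) v"
  have p: "?p permutes X" using cY v YX by (intro permutes_swap_id) auto
  have "perm_act X k ?p c \<in> C" using sym p c unfolding symmetric_family_def by auto
  moreover have "perm_act X k ?p c Y = v"
    using Y cY v unfolding perm_act_def by simp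
  ultimately show ?thesis by blast
qed

lemma patch:
  assumes C: "C \<subseteq> choice_funs X k" and sym: "symmetric_family X k C"
    and r2: "2 \<le> r" and rk: "r \<le> k"
    and hyp: "\<forall>Y\<in>ksets X k. \<forall>a\<in>(\<Pi>\<^sub>E i\<in>{..<r}. Y). inj_on a {..<r} \<longrightarrow>
               (\<exists>f\<in>averaging_funs X k C r.
                  f Y a = a 1 \<and>
                  (\<forall>Z\<in>ksets X k. Z \<noteq> Y \<longrightarrow> (\<forall>b\<in>(\<Pi>\<^sub>E i\<in>{..<r}. Z). f Z b = b 0)))"
    and c1: "c1 \<in> C" and Y: "Y \<in> ksets X k" and y: "y \<in> Y"
  shows "c1(Y := y) \<in> C"
proof (cases "y = c1 Y")
  case True
  then show ?thesis using c1 by simp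
next
  case False
  let ?u = "c1 Y"
  have c1ch: "c1 \<in> choice_funs X k" using C c1 by auto
  have uY: "?u \<in> Y" using c1ch Y unfolding choice_funs_def by auto
  have cardY: "card Y = k" and fY: "finite Y" using Y rk r2 unfolding ksets_def
    by auto (metis card.infinite not_numeral_le_zero le_trans)
  have "card (Y - {?u, y}) = k - 2" using cardY fY uY y False by (simp add: card_Diff_subset)
  hence "card {..<r-2} \<le> card (Y - {?u, y})" using rk by simp
  then obtain g where g: "g ` {..<r-2} \<subseteq> Y - {?u, y}" "inj_on g {..<r-2}"
    using card_le_inj[of "{..<r-2}" "Y - {?u, y}"] fY by auto
  define a where "a = (\<lambda>i\<in>{..<r}. if i = 0 then ?u else if i = 1 then y else g (i - 2))"
  have a0: "a 0 = ?u" and a1: "a 1 = y" using r2 unfolding a_def by auto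
  have aPi: "a \<in> (\<Pi>\<^sub>E i\<in>{..<r}. Y)" using g uY y unfolding a_def by (auto simp: image_subset_iff)
  have aY: "a i \<in> Y - {?u, y}" if "i < r" "\<not> i < 2" for i
  proof -
    have "i - 2 \<in> {..<r-2}" using that by auto
    then have "g (i-2) \<in> Y - {?u, y}" using g(1) by (rule subsetD[OF _ imageI, rotated])
    moreover have "a i = g (i-2)" using that unfolding a_def by auto
    ultimately show ?thesis by simp
  qed
  have alow: "a i = ?u \<or> a i = y" if "i < 2" for i
  proof -
    have "i = 0 \<or> i = 1" using that by linarith
    then show ?thesis
    proof
      assume "i = 0" then show ?thesis using a0 by simp
    next
      assume "i = 1" then show ?thesis using a1 by simp
    qed
  qed
  have alow2: "i = j" if "i < 2" "j < 2" "a i = a j" for i j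
  proof -
    have i01: "i = 0 \<or> i = 1" and j01: "j = 0 \<or> j = 1" using that by linarith+
    have ne: "a 0 \<noteq> a 1" using a0 a1 False by simp
    from i01 j01 show ?thesis using that(3) ne by (elim disjE) simp_all
  qed
  have ainj: "inj_on a {..<r}"
  proof (rule inj_onI)
    fix i j assume i: "i \<in> {..<r}" and j: "j \<in> {..<r}" and e: "a i = a j"
    show "i = j"
    proof (cases "i < 2")
      case True
      show ?thesis
      proof (cases "j < 2")
        case True
        then show ?thesis using alow2 \<open>i < 2\<close> e by blast
      next
        case False
        then show ?thesis using aY[of j] alow[of i] j \<open>i < 2\<close> e by auto
      qed
    next
      case ni: False
      show ?thesis
      proof (cases "j < 2")
        case True
        then show ?thesis using aY[of i] alow[of j] i ni e by auto
      next
        case False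
        then have "g (i-2) = g (j-2)" using e i j ni unfolding a_def by auto
        then have "i - 2 = j - 2" using g(2) i j ni False by (auto dest: inj_onD)
        then show ?thesis using ni False by simp
      qed
    qed
  qed
  obtain f where f: "f \<in> averaging_funs X k C r" "f Y a = a 1"
    "\<forall>Z\<in>ksets X k. Z \<noteq> Y \<longrightarrow> (\<forall>b\<in>(\<Pi>\<^sub>E i\<in>{..<r}. Z). f Z b = b 0)"
  proof -
    have "\<exists>f\<in>averaging_funs X k C r. f Y a = a 1 \<and>
                  (\<forall>Z\<in>ksets X k. Z \<noteq> Y \<longrightarrow> (\<forall>b\<in>(\<Pi>\<^sub>E i\<in>{..<r}. Z). f Z b = b 0))"
      using mp[OF bspec[OF bspec[OF hyp Y] aPi] ainj] .
    then show ?thesis using that by blast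
  qed
  define cc where "cc i = (if i = 0 then c1 else SOME c'. c' \<in> C \<and> c' Y = a i)" for i
  have cc: "cc i \<in> C \<and> cc i Y = a i" if "i < r" for i
  proof (cases "i = 0")
    case True then show ?thesis using c1 a0 unfolding cc_def by simp
  next
    case False
    have "a i \<in> Y" using aPi that by auto
    then have "\<exists>c'. c' \<in> C \<and> c' Y = a i" using move_val[OF C sym c1 Y] by blast
    then have "(SOME c'. c' \<in> C \<and> c' Y = a i) \<in> C \<and> (SOME c'. c' \<in> C \<and> c' Y = a i) Y = a i"
      by (rule someI_ex)
    then show ?thesis using False unfolding cc_def by simp
  qed
  have G: "(\<lambda>Z\<in>ksets X k. f Z (\<lambda>i\<in>{..<r}. cc i Z)) \<in> C"
    using f(1) cc unfolding averaging_funs_def by auto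
  have "(\<lambda>Z\<in>ksets X k. f Z (\<lambda>i\<in>{..<r}. cc i Z)) = c1(Y := y)"
  proof
    fix Z
    show "(\<lambda>Z\<in>ksets X k. f Z (\<lambda>i\<in>{..<r}. cc i Z)) Z = (c1(Y := y)) Z"
    proof (cases "Z \<in> ksets X k")
      case False
      then have "Z \<noteq> Y" using Y by auto
      moreover have "c1 Z = undefined" using c1ch False unfolding choice_funs_def by auto
      ultimately show ?thesis using False by simp
    next
      case Zk: True
      show ?thesis
      proof (cases "Z = Y")
        case True
        have "(\<lambda>i\<in>{..<r}. cc i Z) = a"
          using cc True aPi by (auto simp: PiE_def extensional_def)
        then show ?thesis using True Zk f(2) a1 by simp
      next
        case False
        have "(\<lambda>i\<in>{..<r}. cc i Z) \<in> (\<Pi>\<^sub>E i\<in>{..<r}. Z)"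
          using cc C Zk unfolding choice_funs_def by auto
        have "\<forall>b\<in>(\<Pi>\<^sub>E i\<in>{..<r}. Z). f Z b = b 0"
          using f(3) Zk False by blast
        then have "f Z (\<lambda>i\<in>{..<r}. cc i Z) = (\<lambda>i\<in>{..<r}. cc i Z) 0"
          using \<open>(\<lambda>i\<in>{..<r}. cc i Z) \<in> (\<Pi>\<^sub>E i\<in>{..<r}. Z)\<close> by (rule bspec)
        then have "f Z (\<lambda>i\<in>{..<r}. cc i Z) = cc 0 Z" using r2 by simp
        then show ?thesis using Zk False r2 unfolding cc_def by simp
      qed
    qed
  qed
  then show ?thesis using G by simp
qed

theorem claim14p4:
  fixes X :: "'a set" and k r :: nat and C :: "('a set \<Rightarrow> 'a) set"
  assumes "finite X"
    and "1 \<le> k" and "k \<le> card X - 1"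
    and "C \<subseteq> choice_funs X k" and "C \<noteq> {}"
    and "symmetric_family X k C"
    and standing: "\<forall>s f. f \<in> averaging_funs X k C s \<and> simple_fam X k s f \<longrightarrow> monarchy X k s f"
    and "3 \<le> r" and "r \<le> k"
    and hyp: "\<forall>Y\<in>ksets X k. \<forall>a\<in>(\<Pi>\<^sub>E i\<in>{..<r}. Y). inj_on a {..<r} \<longrightarrow>
               (\<exists>f\<in>averaging_funs X k C r.
                  f Y a = a 1 \<and>
                  (\<forall>Z\<in>ksets X k. Z \<noteq> Y \<longrightarrow> (\<forall>b\<in>(\<Pi>\<^sub>E i\<in>{..<r}. Z). f Z b = b 0)))"
  shows "C = choice_funs X k"
proof
  show "C \<subseteq> choice_funs X k" by fact
  show "choice_funs X k \<subseteq> C"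
  proof
    fix d assume d: "d \<in> choice_funs X k"
    obtain c0 where c0: "c0 \<in> C" using assms(5) by blast
    have fin: "finite (ksets X k)"
      by (rule finite_subset[of _ "Pow X"]) (use assms(1) in \<open>auto simp: ksets_def\<close>)
    have "S \<subseteq> ksets X k \<longrightarrow> (\<lambda>Z. if Z \<in> S then d Z else c0 Z) \<in> C" if "finite S" for S
      using that
    proof (induction S rule: finite_induct)
      case empty then show ?case using c0 by simp
    next
      case (insert Y S)
      show ?case
      proof
        assume sub: "insert Y S \<subseteq> ksets X k"
        then have IH: "(\<lambda>Z. if Z \<in> S then d Z else c0 Z) \<in> C" using insert by auto
        have Yk: "Y \<in> ksets X k" using sub by auto
        have dY: "d Y \<in> Y" using d Yk unfolding choice_funs_def by auto
        have "(\<lambda>Z. if Z \<in> S then d Z else c0 Z)(Y := d Y) \<in> C"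
          by (rule patch[OF assms(4) assms(6) _ assms(9) hyp IH Yk dY]) (use assms(8) in simp)
        moreover have "(\<lambda>Z. if Z \<in> S then d Z else c0 Z)(Y := d Y)
            = (\<lambda>Z. if Z \<in> insert Y S then d Z else c0 Z)" by auto
        ultimately show "(\<lambda>Z. if Z \<in> insert Y S then d Z else c0 Z) \<in> C" by simp
      qed
    qed
    from this[OF fin] have "(\<lambda>Z. if Z \<in> ksets X k then d Z else c0 Z) \<in> C" by simp
    moreover have "(\<lambda>Z. if Z \<in> ksets X k then d Z else c0 Z) = d"
    proof
      fix Z
      have "c0 \<in> choice_funs X k" using c0 assms(4) by auto
      then show "(if Z \<in> ksets X k then d Z else c0 Z) = d Z"
        using d unfolding choice_funs_def by (auto simp: PiE_def extensional_def)
    qed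
    ultimately show "d \<in> C" by simp
  qed
qed

end
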